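(* For every integer $M\ge3$, the $M\times M$ circulant matrix $\mathbf C$ with first row $(1,-1,0,\dots,0,1)$ (i.e. $(\mathbf C\mathbf x)_p=x_p+x_{p-1}-x_{p+1}$ with indices modulo $M$) is invertible. Hence for every $\boldsymbol\psi\in\mathbb R^M$ the system $\mathbf C\mathbf x=\boldsymbol\psi$ has the unique solution $\mathbf x=\mathbf C^{-1}\boldsymbol\psi$; in particular, the Tensor Ring ranks, which satisfy $\mathbf C(\log r_1,\dots,\log r_M)^\top=\boldsymbol\psi$ with $\psi_p=\log\xi_p$, are uniquely determined by $\boldsymbol\psi$ via $r_p=\exp(x_p)$.
   Context: In the Tensor Ring model of order $M$ with ranks $(r_1,\dots,r_M)$, $\xi_p:=(\mathbb E[Y])^2v_{\{p,p+1\}}/(v_{\{p\}}v_{\{p+1\}})$ is a quantity computed from the mean $\mathbb E[Y]$ and pure interaction terms $v_S$ (inclusion–exclusion combinations of exact-sharing covariances of the observed tensor entries), and the paper shows that $x_p=\log r_p$ satisfies $x_p+x_{p-1}-x_{p+1}=\log\xi_p$ for $p=1,\dots,M$ (indices modulo $M$). *)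

theory Defs
  imports "Jordan_Normal_Form.Matrix"
begin

definition circC :: "nat \<Rightarrow> real mat" where
  "circC M = mat M M (\<lambda>(i,j).
      (if j = i then 1 else 0)
    + (if j = (i + M - 1) mod M then 1 else 0)
    - (if j = (i + 1) mod M then 1 else 0))"

end

theory Submission
  imports Defs "Jordan_Normal_Form.Determinant"
begin

lemma circC_carrier: "circC M \<in> carrier_mat M M"
  unfolding circC_def by simp

lemma sum_ind: "a < (M::nat) \<Longrightarrow> (\<Sum>j<M. (if j = a then 1 else 0) * (f j::real)) = f a"
proof -
  have "(\<lambda>j. (if j = a then 1 else 0) * (f j::real)) = (\<lambda>j. if j = a then f a else 0)" by auto
  then show "a < M \<Longrightarrow> ?thesis" by (simp only:) simp
qed

lemma circC_apply:
  assumes x: "x \<in> carrier_vec M" and i: "i < M"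
  shows "(circC M *\<^sub>v x) $ i = x $ i + x $ ((i + M - 1) mod M) - x $ ((i + 1) mod M)"
proof -
  have M0: "M > 0" using i by simp
  have "(circC M *\<^sub>v x) $ i = (\<Sum>j<M. ((if j = i then 1 else 0)
    + (if j = (i + M - 1) mod M then 1 else 0)
    - (if j = (i + 1) mod M then 1 else 0)) * x $ j)"
    using x i unfolding circC_def by (simp add: mult_mat_vec_def scalar_prod_def lessThan_atLeast0)
  also have "\<dots> = (\<Sum>j<M. (if j = i then 1 else 0) * x $ j)
     + (\<Sum>j<M. (if j = (i + M - 1) mod M then 1 else 0) * x $ j)
     - (\<Sum>j<M. (if j = (i + 1) mod M then 1 else 0) * x $ j)"
    by (simp add: algebra_simps sum.distrib sum_subtractf)
  also have "\<dots> = x $ i + x $ ((i + M - 1) mod M) - x $ ((i + 1) mod M)"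
    using i M0 by (simp only: sum_ind mod_less_divisor)
  finally show ?thesis .
qed

lemma mod_fw: "a < (M::nat) \<Longrightarrow> ((a + M - 1) mod M + 1) mod M = a"
proof (cases "a = 0")
  case True assume "a < M" then show ?thesis using True by (simp add: mod_Suc)
next
  case False
  assume a: "a < M"
  then have "(a + M - 1) mod M = a - 1" using False
    by (metis add.commute add_diff_assoc2 less_imp_diff_less mod_add_self1 mod_less not_less_zero
        not_gr_zero less_one linorder_not_le)
  then show ?thesis using False a by simp
qed

lemma mod_bw: "a < (M::nat) \<Longrightarrow> ((a + 1) mod M + M - 1) mod M = a"
proof (cases "a + 1 = M")
  case True assume "a < M" then show ?thesis using True by simp
next
  case False assume a: "a < M"
  then have "(a + 1) mod M = a + 1" using False by simp
  then show ?thesis using a by simp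
qed

lemma shift_sum:
  fixes f :: "nat \<Rightarrow> real"
  assumes M0: "M > 0"
  shows "(\<Sum>i<M. f ((i + M - 1) mod M) * f i) = (\<Sum>i<M. f i * f ((i + 1) mod M))"
  apply (rule sum.reindex_bij_witness[where i = "\<lambda>k. (k + 1) mod M" and j = "\<lambda>i. (i + M - 1) mod M"])
  using M0 by (auto simp: mod_fw[simplified] mod_bw[simplified])

lemma circC_inj:
  assumes M0: "M > 0" and v: "v \<in> carrier_vec M" and z: "circC M *\<^sub>v v = 0\<^sub>v M"
  shows "v = 0\<^sub>v M"
proof -
  define f where "f i = v $ i" for i
  have ci: "f i + f ((i + M - 1) mod M) - f ((i + 1) mod M) = 0" if "i < M" for i
    using circC_apply[OF v that] z that unfolding f_def
    by (metis index_zero_vec(1))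
  have "0 = (\<Sum>i<M. f i * (f i + f ((i + M - 1) mod M) - f ((i + 1) mod M)))"
    using ci by simp
  also have "\<dots> = (\<Sum>i<M. f i ^ 2) + (\<Sum>i<M. f ((i + M - 1) mod M) * f i)
      - (\<Sum>i<M. f i * f ((i + 1) mod M))"
    by (simp add: algebra_simps power2_eq_square sum.distrib sum_subtractf)
  also have "\<dots> = (\<Sum>i<M. f i ^ 2)" using shift_sum[OF M0, of f] by simp
  finally have "(\<Sum>i<M. f i ^ 2) = 0" by simp
  then have "\<forall>i\<in>{..<M}. f i ^ 2 = 0"
    by (subst sum_nonneg_eq_0_iff[symmetric]) auto
  then show ?thesis using v unfolding f_def by (intro eq_vecI) auto
qed

lemma smult_cancel_mat: "(c::real) \<noteq> 0 \<Longrightarrow> (1 / c) \<cdot>\<^sub>m (c \<cdot>\<^sub>m 1\<^sub>m n) = 1\<^sub>m n"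
  by (intro eq_matI) auto

theorem mainTheorem12:
  fixes M :: nat
  assumes "M \<ge> 3"
  shows "invertible_mat (circC M) \<and>
    (\<exists>Cinv \<in> carrier_mat M M.
       circC M * Cinv = 1\<^sub>m M \<and> Cinv * circC M = 1\<^sub>m M \<and>
       (\<forall>\<psi> \<in> carrier_vec M.
          (\<forall>x \<in> carrier_vec M. circC M *\<^sub>v x = \<psi> \<longleftrightarrow> x = Cinv *\<^sub>v \<psi>) \<and>
          (\<forall>r :: nat \<Rightarrow> real. (\<forall>p<M. r p > 0) \<and>
              circC M *\<^sub>v vec M (\<lambda>p. ln (r p)) = \<psi> \<longrightarrow>
              (\<forall>p<M. r p = exp ((Cinv *\<^sub>v \<psi>) $ p)))))"
proof -
  have M0: "M > 0" using assms by simp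
  let ?C = "circC M"
  have C: "?C \<in> carrier_mat M M" by (rule circC_carrier)
  have d: "det ?C \<noteq> 0"
    using det_0_iff_vec_prod_zero_field[OF C] circC_inj[OF M0] by blast
  define B where "B = (1 / det ?C) \<cdot>\<^sub>m adj_mat ?C"
  have B: "B \<in> carrier_mat M M" unfolding B_def using adj_mat(1)[OF C] by simp
  have CB: "?C * B = 1\<^sub>m M" unfolding B_def
    using adj_mat[OF C] d C by (simp add: mult_smult_distrib smult_cancel_mat)
  have BC: "B * ?C = 1\<^sub>m M" unfolding B_def
    using adj_mat[OF C] d C by (simp add: mult_smult_assoc_mat smult_cancel_mat)
  have inv: "invertible_mat ?C"
    unfolding invertible_mat_def inverts_mat_def using C B CB BC by auto
  have eq: "?C *\<^sub>v x = \<psi> \<longleftrightarrow> x = B *\<^sub>v \<psi>" if x: "x \<in> carrier_vec M" and psi: "\<psi> \<in> carrier_vec M" for x \<psi>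
  proof
    assume "?C *\<^sub>v x = \<psi>"
    then have "B *\<^sub>v \<psi> = (B * ?C) *\<^sub>v x" using B C x by simp
    then show "x = B *\<^sub>v \<psi>" using BC x by simp
  next
    assume "x = B *\<^sub>v \<psi>"
    then have "?C *\<^sub>v x = (?C * B) *\<^sub>v \<psi>" using B C psi by simp
    then show "?C *\<^sub>v x = \<psi>" using CB psi by simp
  qed
  show ?thesis
  proof (intro conjI bexI[of _ B] ballI allI impI)
    fix \<psi> r p assume psi: "\<psi> \<in> carrier_vec M"
      and h: "(\<forall>p<M. 0 < r p) \<and> ?C *\<^sub>v vec M (\<lambda>p. ln (r p)) = \<psi>" and p: "p < M"
    then have "vec M (\<lambda>p. ln (r p)) = B *\<^sub>v \<psi>" using eq[OF _ psi] by simp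
    then have "ln (r p) = (B *\<^sub>v \<psi>) $ p" using p by (metis index_vec)
    then show "r p = exp ((B *\<^sub>v \<psi>) $ p)" using h p by (metis exp_ln)
  qed (use inv B CB BC eq in auto)
qed

end
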